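(* Let $t\ge 2$, let $n_1,\dots,n_t$ be positive integers, and let $G=K_{n_1,\dots,n_t}$ be the complete $t$-partite graph with partite sets $V_1,\dots,V_t$, $|V_i|=n_i$. Let $N_t=\{1,\dots,t\}$ and $f(I)=\sum_{i\in I}n_i$ for $I\subseteq N_t$. Let $p$ be a positive integer with $f(N_t)>p$. Then for every optimal $\gamma_p(G)$-set $D$ and every $i\in N_t\setminus I_D$, $$\left\lceil\frac{p-f(I_D)}{t-|I_D|-1}\right\rceil\le n_i.$$
   Context: A set $S\subseteq V(G)$ is a $p$-dominating set of $G$ if every vertex $v\in V(G)\setminus S$ has at least $p$ neighbors in $S$. The $p$-domination number $\gamma_p(G)$ is the minimum cardinality of a $p$-dominating set of $G$, and a $\gamma_p(G)$-set is a $p$-dominating set of cardinality $\gamma_p(G)$. For $D\subseteq V(G)$ write $D_i=V_i\cap D$ for $i\in N_t$ and $I_D=\{i\in N_t: |D_i|=|V_i|\}$. For a $\gamma_p(G)$-set $D$ with $|I_D|<t$ define $$\mu(D)=\sum_{i\in N_t\setminus I_D}\left|\,|D_i|-\frac{|D|-f(I_D)}{t-|I_D|}\right|.$$ A $\gamma_p(G)$-set $D$ is optimal if: (1) $f(I_D)<p$; (2) $|I_D|\ge |I_S|$ for every $\gamma_p(G)$-set $S$; (3) $\mu(D)\le\mu(S)$ for every $\gamma_p(G)$-set $S$ with $I_S=I_D$. *)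

theory Defs
  imports Complex_Main
begin

definition p_dominating :: "'a set \<Rightarrow> ('a \<Rightarrow> 'a \<Rightarrow> bool) \<Rightarrow> nat \<Rightarrow> 'a set \<Rightarrow> bool" where
  "p_dominating V E p S \<longleftrightarrow> S \<subseteq> V \<and> (\<forall>v \<in> V - S. p \<le> card {u \<in> S. E v u})"

definition gamma_p :: "'a set \<Rightarrow> ('a \<Rightarrow> 'a \<Rightarrow> bool) \<Rightarrow> nat \<Rightarrow> nat" where
  "gamma_p V E p = (LEAST k. \<exists>S. p_dominating V E p S \<and> card S = k)"

definition gamma_p_set :: "'a set \<Rightarrow> ('a \<Rightarrow> 'a \<Rightarrow> bool) \<Rightarrow> nat \<Rightarrow> 'a set \<Rightarrow> bool" where
  "gamma_p_set V E p S \<longleftrightarrow> p_dominating V E p S \<and> card S = gamma_p V E p"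

text \<open>Vertices are pairs (i,k) with i in {1..t} and k < n i; the partite set V_i
  consists of the vertices with first component i; two vertices are adjacent
  iff they lie in different partite sets.\<close>

definition part :: "(nat \<Rightarrow> nat) \<Rightarrow> nat \<Rightarrow> (nat \<times> nat) set" where
  "part n i = {(j, k). j = i \<and> k < n i}"

definition kpart_V :: "nat \<Rightarrow> (nat \<Rightarrow> nat) \<Rightarrow> (nat \<times> nat) set" where
  "kpart_V t n = (\<Union>i \<in> {1..t}. part n i)"

definition kpart_E :: "(nat \<times> nat) \<Rightarrow> (nat \<times> nat) \<Rightarrow> bool" where
  "kpart_E u v \<longleftrightarrow> fst u \<noteq> fst v"

definition fI :: "(nat \<Rightarrow> nat) \<Rightarrow> nat set \<Rightarrow> nat" where
  "fI n I = (\<Sum>i \<in> I. n i)"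

definition I_of :: "nat \<Rightarrow> (nat \<Rightarrow> nat) \<Rightarrow> (nat \<times> nat) set \<Rightarrow> nat set" where
  "I_of t n D = {i \<in> {1..t}. card (part n i \<inter> D) = n i}"

definition mu :: "nat \<Rightarrow> (nat \<Rightarrow> nat) \<Rightarrow> (nat \<times> nat) set \<Rightarrow> real" where
  "mu t n D = (\<Sum>i \<in> {1..t} - I_of t n D.
      \<bar>real (card (part n i \<inter> D))
        - (real (card D) - real (fI n (I_of t n D))) / (real t - real (card (I_of t n D)))\<bar>)"

definition optimal :: "nat \<Rightarrow> (nat \<Rightarrow> nat) \<Rightarrow> nat \<Rightarrow> (nat \<times> nat) set \<Rightarrow> bool" where
  "optimal t n p D \<longleftrightarrow>
     gamma_p_set (kpart_V t n) kpart_E p D \<and>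
     card (I_of t n D) < t \<and>
     fI n (I_of t n D) < p \<and>
     (\<forall>S. gamma_p_set (kpart_V t n) kpart_E p S \<longrightarrow> card (I_of t n S) \<le> card (I_of t n D)) \<and>
     (\<forall>S. gamma_p_set (kpart_V t n) kpart_E p S \<and> I_of t n S = I_of t n D \<longrightarrow> mu t n D \<le> mu t n S)"

end

theory Submission
  imports Defs
begin

lemma part_eq: "part n j = {j} \<times> {..<n j}"
  unfolding part_def by auto
lemma part_fin[simp]: "finite (part n j)"
  by (simp add: part_eq)
lemma part_card[simp]: "card (part n j) = n j"
  by (simp add: part_eq card_cartesian_product)
lemma mem_part: "u \<in> part n j \<longleftrightarrow> fst u = j \<and> snd u < n j"
  unfolding part_def by (cases u) auto
lemma V_fin: "finite (kpart_V t n)"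
  unfolding kpart_V_def by auto
lemma mem_V: "u \<in> kpart_V t n \<longleftrightarrow> fst u \<in> {1..t} \<and> u \<in> part n (fst u)"
  unfolding kpart_V_def by (auto simp: mem_part)
lemma nbrs: "S \<subseteq> kpart_V t n \<Longrightarrow> {u \<in> S. kpart_E v u} = S - part n (fst v)"
  unfolding kpart_E_def by (auto simp: mem_V mem_part)
lemma lemA:
  assumes dom: "p_dominating (kpart_V t n) kpart_E p D" and j: "j \<in> {1..t}"
    and lt: "card (part n j \<inter> D) < n j"
  shows "p \<le> card (D - part n j)"
proof -
  have DV: "D \<subseteq> kpart_V t n" using dom unfolding p_dominating_def by (rule conjunct1)
  have "part n j \<inter> D \<noteq> part n j" using lt by auto
  then obtain w where w: "w \<in> part n j" "w \<notin> D" by blast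
  have fw: "fst w = j" using w(1) by (simp add: mem_part)
  have "w \<in> kpart_V t n" unfolding mem_V using fw j w(1) by simp
  then have "p \<le> card {u \<in> D. kpart_E w u}" using dom w(2) unfolding p_dominating_def by blast
  then show ?thesis using nbrs[OF DV, of w] fw by simp
qed

lemma memV2: "u \<in> kpart_V t n \<longleftrightarrow> fst u \<in> {1..t} \<and> snd u < n (fst u)"
  by (simp add: mem_V mem_part)

lemma key:
  assumes opt: "optimal t n p D"
    and i: "i \<in> {1..t} - I_of t n D"
  shows "p \<le> fI n (I_of t n D) + n i"
proof (rule ccontr)
  assume neg: "\<not> ?thesis"
  define I where "I = I_of t n D"
  have gs: "gamma_p_set (kpart_V t n) kpart_E p D" using opt unfolding optimal_def by simp
  have dom: "p_dominating (kpart_V t n) kpart_E p D" using gs unfolding gamma_p_set_def by simp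
  have DV: "D \<subseteq> kpart_V t n" using dom unfolding p_dominating_def by simp
  have finD: "finite D" using DV V_fin finite_subset by blast
  have iI: "i \<in> {1..t}" "i \<notin> I" using i I_def by auto
  have Isub: "I \<subseteq> {1..t}" unfolding I_def I_of_def by auto
  have full: "part n j \<subseteq> D" if "j \<in> I" for j
  proof -
    have "card (part n j \<inter> D) = card (part n j)" using that unfolding I_def I_of_def by simp
    hence "part n j \<inter> D = part n j" using card_subset_eq[of "part n j" "part n j \<inter> D"] by simp
    thus ?thesis by blast
  qed
  have dle: "card (part n j \<inter> D) \<le> n j" for j
    using card_mono[of "part n j" "part n j \<inter> D"] by simp
  have di: "card (part n i \<inter> D) < n i"
    using dle[of i] iI unfolding I_def I_of_def by (simp add: le_less)
  define Y where "Y = {u \<in> D. fst u \<notin> I \<and> fst u \<noteq> i}"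
  have split: "D - part n i = (\<Union>j\<in>I. part n j) \<union> Y"
  proof
    show "D - part n i \<subseteq> (\<Union>j\<in>I. part n j) \<union> Y"
    proof
      fix u assume u: "u \<in> D - part n i"
      have uV: "u \<in> kpart_V t n" using u DV by blast
      then have "fst u \<noteq> i" using u by (auto simp: memV2 mem_part)
      then show "u \<in> (\<Union>j\<in>I. part n j) \<union> Y" using u uV unfolding Y_def by (auto simp: memV2 mem_part)
    qed
    show "(\<Union>j\<in>I. part n j) \<union> Y \<subseteq> D - part n i"
      using full iI unfolding Y_def by (auto simp: mem_part)
  qed
  have disj: "(\<Union>j\<in>I. part n j) \<inter> Y = {}" unfolding Y_def by (auto simp: mem_part)
  have finI: "finite I" using Isub finite_subset by blast
  have cU: "card (\<Union>j\<in>I. part n j) = fI n I"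
    unfolding fI_def
    by (subst card_UN_disjoint) (auto simp: finI mem_part)
  have finY: "finite Y" using finD unfolding Y_def by simp
  have cDi: "card (D - part n i) = fI n I + card Y"
    using split disj cU finY finI by (simp add: card_Un_disjoint)
  have "p \<le> card (D - part n i)" using lemA[OF dom iI(1) di] .
  moreover have "\<not> p \<le> fI n I + n i" using neg unfolding I_def .
  ultimately have Ybig: "n i - card (part n i \<inter> D) \<le> card Y" using cDi by linarith
  obtain X where X: "X \<subseteq> Y" "card X = n i - card (part n i \<inter> D)"
    using obtain_subset_with_card_n[OF Ybig] by blast
  define D' where "D' = (D - X) \<union> (part n i - D)"
  have XD: "X \<subseteq> D" using X unfolding Y_def by auto
  have finX: "finite X" using X finY finite_subset by blast
  have cD': "card D' = card D"
  proof -
    have "card D' = card (D - X) + card (part n i - D)"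
      unfolding D'_def by (rule card_Un_disjoint) (use finD in auto)
    also have "card (D - X) = card D - card X" using XD finX by (simp add: card_Diff_subset)
    also have "card (part n i - D) = n i - card (part n i \<inter> D)"
      by (simp add: card_Diff_subset_Int Int_commute)
    finally show ?thesis using X(2) di card_mono[OF finD XD] by linarith
  qed
  have Xfst: "fst u \<notin> I \<and> fst u \<noteq> i" if "u \<in> X" for u using that X unfolding Y_def by auto
  have D'V: "D' \<subseteq> kpart_V t n"
    using DV iI unfolding D'_def by (auto simp: memV2 mem_part)
  have finD': "finite D'" using D'V V_fin finite_subset by blast
  have domD': "p_dominating (kpart_V t n) kpart_E p D'"
    unfolding p_dominating_def
  proof (intro conjI ballI D'V)
    fix v assume v: "v \<in> kpart_V t n - D'"
    define j where "j = fst v"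
    have j: "j \<in> {1..t}" "v \<in> part n j" using v unfolding j_def by (auto simp: memV2 mem_part)
    have ji: "j \<noteq> i" using v j Xfst[of v] unfolding D'_def j_def by (auto simp: mem_part)
    have jI: "j \<notin> I"
    proof
      assume "j \<in> I"
      hence "v \<in> D" using full j by auto
      moreover have "v \<notin> X" using Xfst[of v] \<open>j \<in> I\<close> j_def by blast
      ultimately show False using v unfolding D'_def by auto
    qed
    have "card (part n j \<inter> D) \<noteq> n j" using jI j unfolding I_def I_of_def by auto
    hence lt: "card (part n j \<inter> D) < n j" using dle[of j] by linarith
    have pD: "p \<le> card (D - part n j)" using lemA[OF dom j(1) lt] .
    have sub: "D' \<inter> part n j \<subseteq> D \<inter> part n j"
      unfolding D'_def using ji by (auto simp: mem_part)
    have "card (D - part n j) = card D - card (D \<inter> part n j)"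
      using finD by (simp add: card_Diff_subset_Int)
    also have "\<dots> \<le> card D' - card (D' \<inter> part n j)"
      using cD' card_mono[OF _ sub] finD by auto
    also have "\<dots> = card (D' - part n j)"
      using finD' by (simp add: card_Diff_subset_Int)
    finally have "p \<le> card (D' - part n j)" using pD by linarith
    thus "p \<le> card {u \<in> D'. kpart_E v u}" using nbrs[OF D'V, of v] j_def by simp
  qed
  have gsD': "gamma_p_set (kpart_V t n) kpart_E p D'"
    using gs domD' cD' unfolding gamma_p_set_def by simp
  have sup: "insert i I \<subseteq> I_of t n D'"
  proof
    fix j assume j: "j \<in> insert i I"
    show "j \<in> I_of t n D'"
    proof (cases "j = i")
      case True
      have "part n i \<inter> D' = part n i" using Xfst unfolding D'_def by (auto simp: mem_part)
      then show ?thesis using True iI unfolding I_of_def by auto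
    next
      case False
      hence jI: "j \<in> I" using j by auto
      have "part n j \<inter> D' = part n j \<inter> D"
        unfolding D'_def using Xfst jI False by (auto simp: mem_part)
      then show ?thesis using jI unfolding I_def I_of_def by auto
    qed
  qed
  have "card (insert i I) \<le> card (I_of t n D')"
    by (rule card_mono[OF _ sup]) (auto simp: I_of_def)
  hence "card I < card (I_of t n D')" using iI finI by simp
  moreover have "card (I_of t n D') \<le> card I" using opt gsD' unfolding I_def optimal_def by blast
  ultimately show False by simp
qed

theorem lemma7:
  fixes t p :: nat and n :: "nat \<Rightarrow> nat" and D :: "(nat \<times> nat) set" and i :: nat
  assumes "t \<ge> 2"
    and "\<forall>j \<in> {1..t}. n j > 0"
    and "p > 0"
    and "fI n {1..t} > p"
    and "optimal t n p D"
    and "i \<in> {1..t} - I_of t n D"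
  shows "\<lceil>(real p - real (fI n (I_of t n D))) / (real t - real (card (I_of t n D)) - 1)\<rceil> \<le> int (n i)"
proof -
  have k: "p \<le> fI n (I_of t n D) + n i" using key assms(5,6) .
  have q: "fI n (I_of t n D) < p" "card (I_of t n D) < t" using assms(5) optimal_def by auto
  define q where "q = real p - real (fI n (I_of t n D))"
  define d where "d = real t - real (card (I_of t n D)) - 1"
  have qpos: "q > 0" "q \<le> real (n i)" using q k unfolding q_def by auto
  have d0: "d \<ge> 0" using q unfolding d_def by auto
  have "q / d \<le> real (n i)"
  proof (cases "d = 0")
    case True then show ?thesis by simp
  next
    case False
    have "card (I_of t n D) + 1 \<noteq> t"
    proof
      assume "card (I_of t n D) + 1 = t"
      hence "real t = real (card (I_of t n D)) + 1" by (metis of_nat_Suc add.commute plus_1_eq_Suc)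
      thus False using False unfolding d_def by simp
    qed
    hence "card (I_of t n D) + 2 \<le> t" using q(2) by linarith
    hence "real (card (I_of t n D) + 2) \<le> real t" by (simp only: of_nat_le_iff)
    hence "d \<ge> 1" unfolding d_def by simp
    hence "q / d \<le> q" using qpos by (simp add: divide_le_eq)
    then show ?thesis using qpos by linarith
  qed
  hence "\<lceil>q / d\<rceil> \<le> int (n i)" by (simp add: ceiling_le_iff)
  thus ?thesis unfolding q_def d_def .
qed

end
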